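(* Let $K$ be a good triangulation of $P^n$, let $T\in C^2(K,W;\mathbb Q)$ be a Thom cocycle of $H_{1,0}$, and let $\mathcal O$ be a good ordering of $K$ with respect to $H_{1,0}$. Then: (1) the map $\alpha\mapsto T\overset{\mathcal O}{\cap}\alpha$ commutes with the boundary $\delta$; (2) the image of $T\overset{\mathcal O}{\cap}:C_k(K;\mathbb Q)\to C_{k-2}(K;\mathbb Q)$ is contained in $C_{k-2}(L_1;\mathbb Q)$, where $L_1=K\cap H_{1,0}$. Consequently $T\overset{\mathcal O}{\cap}$ induces a homomorphism of complexes $C_k(K,\mathbf D^n;\mathbb Q)\to C_{k-2}(L_1,\mathbf D^{n-1};\mathbb Q)$.
   Context: $P^n=(\mathbb P^1_{\mathbb C})^n$ with coordinates $z_1,\dots,z_n$; $H_{i,\alpha}=\{z_i=\alpha\}$ for $\alpha\in\{0,\infty\}$; cubical faces are nonempty intersections of one or more $H_{i,\alpha}$; $\mathbf D^n=\bigcup_i\{z_i=1\}$. $H_{1,0}$ is identified with $P^{n-1}$ via $(0,z_2,\dots,z_n)\mapsto(z_2,\dots,z_n)$, and $\mathbf D^{n-1}$ denotes $\mathbf D^n\cap H_{1,0}$. A good triangulation of $P^n$ is a finite simplicial complex $K$ with a semi-algebraic homeomorphism $|K|\to P^n$ (used to identify them) such that: (1) $\mathbf D^n$ is a subcomplex; (2) the image of the relative interior of each simplex is a regular submanifold; (3) every finite union of cubical faces is a full subcomplex (a subcomplex $L$ such that any simplex of $K$ all of whose vertices lie in $L$ belongs to $L$); (4) each set $\{|z_i|\le1\}$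 is a subcomplex. Let $W$ be the union of the simplices of $K$ not meeting $H_{1,0}$ and $\Delta=\{|z_1|<1\}$. There are isomorphisms $H^2(K,W;\mathbb Q)\leftarrow H^2_{\rm sing}(P^n,P^n-H_{1,0};\mathbb Q)\to H^2_{\rm sing}(\Delta,\Delta-H_{1,0};\mathbb Q)$. A Thom cocycle is a simplicial cocycle $T\in C^2(K,W;\mathbb Q)$ (i.e. vanishing on simplices in $W$) whose class corresponds under these isomorphisms to $\delta[\frac{dz_1}{2\pi i z_1}]$, where $[\frac{dz_1}{2\pi i z_1}]\in H^1_{\rm sing}(\Delta-H_{1,0};\mathbb Q)$ and $\delta$ is the connecting homomorphism. An ordering of $K$ is a partial order on the vertices whose restriction to the vertices of each simplex is total; it is good with respect to $H_{1,0}$ if whenever a vertex $v$ lies on $H_{1,0}$ and $w\ge v$, then $w\in H_{1,0}$. For $u\in C^p(K;\mathbb Q)$ and a simplex $\alpha=[v_0,\dots,v_k]$ with $v_0<\dots<v_k$, $u\overset{\mathcal O}{\cap}\alpha=u([v_0,\dots,v_p])\,[v_p,\dots,v_k]$, extended linearly. *)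

theory Defs
  imports "HOL-Analysis.Analysis"
begin

text \<open>P^1 (the Riemann sphere) is modelled as the unit sphere in R x C,
with the coordinate given by stereographic projection from the north pole
(1,0): the point (t,w) has coordinate w/(1-t), and the north pole has
coordinate infinity (encoded as None).\<close>

definition P1 :: "(real \<times> complex) set" where
  "P1 = sphere 0 1"

definition zc :: "real \<times> complex \<Rightarrow> complex option" where
  "zc p = (if fst p = 1 then None else Some (snd p / complex_of_real (1 - fst p)))"

definition Ptop :: "nat \<Rightarrow> (nat \<Rightarrow> real \<times> complex) topology" where
  "Ptop n = product_topology (\<lambda>i. top_of_set P1) {1..n}"

definition Pn :: "nat \<Rightarrow> (nat \<Rightarrow> real \<times> complex) set" where
  "Pn n = topspace (Ptop n)"

definition Hyp :: "nat \<Rightarrow> nat \<Rightarrow> complex option \<Rightarrow> (nat \<Rightarrow> real \<times> complex) set" where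
  "Hyp n i \<alpha> = {x \<in> Pn n. zc (x i) = \<alpha>}"

definition cubical_face :: "nat \<Rightarrow> (nat \<Rightarrow> real \<times> complex) set \<Rightarrow> bool" where
  "cubical_face n C \<longleftrightarrow> C \<noteq> {} \<and>
     (\<exists>J. J \<noteq> {} \<and> J \<subseteq> {1..n} \<times> {Some 0, None} \<and>
          C = Pn n \<inter> (\<Inter>(i,\<alpha>)\<in>J. Hyp n i \<alpha>))"

definition Dn :: "nat \<Rightarrow> (nat \<Rightarrow> real \<times> complex) set" where
  "Dn n = (\<Union>i\<in>{1..n}. {x \<in> Pn n. zc (x i) = Some 1})"

definition unit_poly :: "nat \<Rightarrow> nat \<Rightarrow> (nat \<Rightarrow> real \<times> complex) set" where
  "unit_poly n i = {x \<in> Pn n. \<exists>z. zc (x i) = Some z \<and> cmod z \<le> 1}"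

definition simplicial_complex :: "'v set set \<Rightarrow> bool" where
  "simplicial_complex K \<longleftrightarrow> finite K \<and>
     (\<forall>\<sigma>\<in>K. finite \<sigma> \<and> \<sigma> \<noteq> {} \<and> (\<forall>\<tau>. \<tau> \<subseteq> \<sigma> \<and> \<tau> \<noteq> {} \<longrightarrow> \<tau> \<in> K))"

definition vertices :: "'v set set \<Rightarrow> 'v set" where
  "vertices K = \<Union>K"

text \<open>|K|: barycentric-coordinate functions supported on a simplex.\<close>
definition realization :: "'v set set \<Rightarrow> ('v \<Rightarrow> real) set" where
  "realization K = {f. (\<forall>v. 0 \<le> f v) \<and> {v. f v \<noteq> 0} \<in> K \<and> sum f (vertices K) = 1}"

definition closed_simplex :: "'v set set \<Rightarrow> 'v set \<Rightarrow> ('v \<Rightarrow> real) set" where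
  "closed_simplex K \<sigma> = {f \<in> realization K. {v. f v \<noteq> 0} \<subseteq> \<sigma>}"

definition open_simplex :: "'v set set \<Rightarrow> 'v set \<Rightarrow> ('v \<Rightarrow> real) set" where
  "open_simplex K \<sigma> = {f \<in> realization K. {v. f v \<noteq> 0} = \<sigma>}"

definition vertex_point :: "'v \<Rightarrow> 'v \<Rightarrow> real" where
  "vertex_point v = (\<lambda>w. if w = v then 1 else 0)"

definition simplices_in ::
  "'v set set \<Rightarrow> (('v \<Rightarrow> real) \<Rightarrow> 'a) \<Rightarrow> 'a set \<Rightarrow> 'v set set" where
  "simplices_in K h S = {\<sigma> \<in> K. h ` closed_simplex K \<sigma> \<subseteq> S}"

definition is_subcomplex ::
  "'v set set \<Rightarrow> (('v \<Rightarrow> real) \<Rightarrow> 'a) \<Rightarrow> 'a set \<Rightarrow> bool" where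
  "is_subcomplex K h S \<longleftrightarrow> S = (\<Union>\<sigma>\<in>simplices_in K h S. h ` closed_simplex K \<sigma>)"

definition is_full_subcomplex ::
  "'v set set \<Rightarrow> (('v \<Rightarrow> real) \<Rightarrow> 'a) \<Rightarrow> 'a set \<Rightarrow> bool" where
  "is_full_subcomplex K h S \<longleftrightarrow> is_subcomplex K h S \<and>
     (\<forall>\<sigma>\<in>K. (\<forall>v\<in>\<sigma>. h (vertex_point v) \<in> S) \<longrightarrow> \<sigma> \<in> simplices_in K h S)"

definition good_triangulation ::
  "nat \<Rightarrow> 'v set set \<Rightarrow> (('v \<Rightarrow> real) \<Rightarrow> nat \<Rightarrow> real \<times> complex) \<Rightarrow> bool" where
  "good_triangulation n K h \<longleftrightarrow>
     simplicial_complex K \<and>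
     homeomorphic_map (top_of_set (realization K)) (Ptop n) h \<and>
     is_subcomplex K h (Dn n) \<and>
     (\<forall>F. finite F \<and> (\<forall>C\<in>F. cubical_face n C) \<longrightarrow> is_full_subcomplex K h (\<Union>F)) \<and>
     (\<forall>i\<in>{1..n}. is_subcomplex K h (unit_poly n i))"

definition is_ordering :: "'v set set \<Rightarrow> ('v \<Rightarrow> 'v \<Rightarrow> bool) \<Rightarrow> bool" where
  "is_ordering K le \<longleftrightarrow> partial_order_on (vertices K) {(a,b). a \<in> vertices K \<and> b \<in> vertices K \<and> le a b}
     \<and> (\<forall>\<sigma>\<in>K. \<forall>a\<in>\<sigma>. \<forall>b\<in>\<sigma>. le a b \<or> le b a)"

definition good_ordering_wrt ::
  "'v set set \<Rightarrow> (('v \<Rightarrow> real) \<Rightarrow> 'a) \<Rightarrow> ('v \<Rightarrow> 'v \<Rightarrow> bool) \<Rightarrow> 'a set \<Rightarrow> bool" where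
  "good_ordering_wrt K h le H \<longleftrightarrow> is_ordering K le \<and>
     (\<forall>v\<in>vertices K. \<forall>w\<in>vertices K. h (vertex_point v) \<in> H \<and> le v w \<longrightarrow> h (vertex_point w) \<in> H)"

definition vlist :: "('v \<Rightarrow> 'v \<Rightarrow> bool) \<Rightarrow> 'v set \<Rightarrow> 'v list" where
  "vlist le \<sigma> = (THE xs. distinct xs \<and> set xs = \<sigma> \<and> sorted_wrt le xs)"

text \<open>Simplicial k-chains (rational coefficients): the oriented simplex
[v_0,...,v_k] (v_0 < ... < v_k) is represented by its vertex set; a chain is
a coefficient function supported on k-simplices of K.\<close>
definition is_chain :: "'v set set \<Rightarrow> nat \<Rightarrow> ('v set \<Rightarrow> rat) \<Rightarrow> bool" where
  "is_chain K k c \<longleftrightarrow> (\<forall>\<sigma>. c \<sigma> \<noteq> 0 \<longrightarrow> \<sigma> \<in> K \<and> card \<sigma> = Suc k)"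

definition supported_in :: "'v set set \<Rightarrow> ('v set \<Rightarrow> rat) \<Rightarrow> bool" where
  "supported_in L c \<longleftrightarrow> (\<forall>\<sigma>. c \<sigma> \<noteq> 0 \<longrightarrow> \<sigma> \<in> L)"

text \<open>Incidence number [sigma : tau]: (-1)^j if tau is sigma with v_j removed.\<close>
definition incidence :: "('v \<Rightarrow> 'v \<Rightarrow> bool) \<Rightarrow> 'v set \<Rightarrow> 'v set \<Rightarrow> rat" where
  "incidence le \<sigma> \<tau> =
     (if \<tau> \<noteq> {} \<and> \<tau> \<subseteq> \<sigma> \<and> card \<sigma> = Suc (card \<tau>)
      then (-1) ^ (length (takeWhile (\<lambda>x. x \<noteq> the_elem (\<sigma> - \<tau>)) (vlist le \<sigma>))) else 0)"

definition bdry :: "'v set set \<Rightarrow> ('v \<Rightarrow> 'v \<Rightarrow> bool) \<Rightarrow> ('v set \<Rightarrow> rat) \<Rightarrow> ('v set \<Rightarrow> rat)" where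
  "bdry K le c = (\<lambda>\<tau>. \<Sum>\<sigma>\<in>K. c \<sigma> * incidence le \<sigma> \<tau>)"

text \<open>p-cochains are functions on simplices (only values on p-simplices of K matter).
u is a cocycle: (delta u)[v_0..v_{p+1}] = sum_j (-1)^j u[..^v_j..] = 0.\<close>
definition is_cocycle :: "'v set set \<Rightarrow> ('v \<Rightarrow> 'v \<Rightarrow> bool) \<Rightarrow> nat \<Rightarrow> ('v set \<Rightarrow> rat) \<Rightarrow> bool" where
  "is_cocycle K le p u \<longleftrightarrow>
     (\<forall>\<sigma>\<in>K. card \<sigma> = p + 2 \<longrightarrow> (\<Sum>\<tau>\<in>Pow \<sigma>. incidence le \<sigma> \<tau> * u \<tau>) = 0)"

definition cap_ord ::
  "'v set set \<Rightarrow> ('v \<Rightarrow> 'v \<Rightarrow> bool) \<Rightarrow> nat \<Rightarrow> ('v set \<Rightarrow> rat) \<Rightarrow> ('v set \<Rightarrow> rat) \<Rightarrow> ('v set \<Rightarrow> rat)" where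
  "cap_ord K le p u c = (\<lambda>\<tau>. \<Sum>\<sigma>\<in>K. c \<sigma> *
      (if Suc p \<le> card \<sigma> \<and> \<tau> = set (drop p (vlist le \<sigma>))
       then u (set (take (Suc p) (vlist le \<sigma>))) else 0))"

end

theory Submission
  imports Defs
begin

lemma ord_props:
  assumes "is_ordering K le"
  shows "\<forall>a\<in>vertices K. \<forall>b\<in>vertices K. le a b \<longrightarrow> le b a \<longrightarrow> a = b"
    and "\<forall>a\<in>vertices K. \<forall>b\<in>vertices K. \<forall>c\<in>vertices K. le a b \<longrightarrow> le b c \<longrightarrow> le a c"
    and "\<forall>a\<in>vertices K. le a a"
    and "\<forall>\<sigma>\<in>K. \<forall>a\<in>\<sigma>. \<forall>b\<in>\<sigma>. le a b \<or> le b a"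
  using assms unfolding is_ordering_def partial_order_on_def preorder_on_def refl_on_def antisym_def trans_def
  by blast+

lemma sorted_unique:
  assumes "\<forall>a\<in>S. \<forall>b\<in>S. le a b \<longrightarrow> le b a \<longrightarrow> a = b"
  shows "distinct ys \<Longrightarrow> sorted_wrt le ys \<Longrightarrow> distinct zs \<Longrightarrow> sorted_wrt le zs
     \<Longrightarrow> set ys = set zs \<Longrightarrow> set ys \<subseteq> S \<Longrightarrow> ys = zs"
proof (induction ys arbitrary: zs)
  case Nil then show ?case by simp
next
  case (Cons y ys)
  from Cons.prems(5) obtain z zs' where zs: "zs = z # zs'" by (cases zs) auto
  have p: "distinct (y#ys)" "sorted_wrt le (y#ys)" "distinct (z#zs')" "sorted_wrt le (z#zs')"
     "insert y (set ys) = insert z (set zs')" "insert y (set ys) \<subseteq> S"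
    using Cons.prems zs by simp_all
  have "y = z"
  proof (rule ccontr)
    assume "y \<noteq> z"
    have "z \<in> insert y (set ys)" "y \<in> insert z (set zs')" using p(5) insertI1 by metis+
    then have "z \<in> set ys" "y \<in> set zs'" using \<open>y \<noteq> z\<close> by simp_all
    then have "le y z" "le z y" using p(2,4) by simp_all
    moreover have "y \<in> S" "z \<in> S" using p(5,6) by blast+
    ultimately show False using assms \<open>y \<noteq> z\<close> by blast
  qed
  have "set ys = set zs'" using p(1,3,5) \<open>y = z\<close> by (metis distinct.simps(2) insert_ident)
  moreover have f1: "distinct zs'" using p(3) by simp
  moreover have f2: "sorted_wrt le zs'" using p(4) by simp
  moreover have f3: "distinct ys" using p(1) by simp
  moreover have f4: "sorted_wrt le ys" using p(2) by simp
  moreover have f5: "set ys \<subseteq> S" using p(6) by simp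
  note f = f1 f2 f3 f4 f5
  ultimately have "ys = zs'" using Cons.IH[OF f(3) f(4) f(1) f(2) _ f(5)] by blast
  then show ?case using zs \<open>y = z\<close> by simp
qed

lemma vlist_eq:
  assumes AS: "\<forall>a\<in>S. \<forall>b\<in>S. le a b \<longrightarrow> le b a \<longrightarrow> a = b"
    and d: "distinct ys" and so: "sorted_wrt le ys" and sub: "set ys \<subseteq> S"
  shows "vlist le (set ys) = ys"
  unfolding vlist_def
proof (rule the_equality)
  show "distinct ys \<and> set ys = set ys \<and> sorted_wrt le ys" using d so by simp
next
  fix zs assume H: "distinct zs \<and> set zs = set ys \<and> sorted_wrt le zs"
  have "ys = zs"
    by (rule sorted_unique[OF AS d so]) (use H sub in simp_all)
  then show "zs = ys" by simp
qed

lemma exists_min: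
  assumes "finite S" "S \<noteq> {}" and tot: "\<forall>a\<in>S. \<forall>b\<in>S. le a b \<or> le b a"
    and tr: "\<forall>a\<in>S. \<forall>b\<in>S. \<forall>c\<in>S. le a b \<longrightarrow> le b c \<longrightarrow> le a c"
  shows "\<exists>m\<in>S. \<forall>y\<in>S. le m y"
proof -
  have "\<And>A. finite A \<Longrightarrow> A \<noteq> {} \<Longrightarrow> A \<subseteq> S \<Longrightarrow> \<exists>m\<in>A. \<forall>y\<in>A. le m y"
  proof -
    fix A :: "'a set"
    assume "finite A" "A \<noteq> {}" "A \<subseteq> S"
    then show "\<exists>m\<in>A. \<forall>y\<in>A. le m y"
    proof (induction A rule: finite_ne_induct)
      case (singleton x)
      have "le x x" using tot singleton by blast
      then show ?case by simp
    next
      case (insert x F)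
      then obtain m where m: "m \<in> F" "\<forall>y\<in>F. le m y" by blast
      have xS: "x \<in> S" and FS: "F \<subseteq> S" using insert.prems by auto
      have mS: "m \<in> S" using m(1) FS by blast
      show ?case
      proof (cases "le x m")
        case True
        have "\<forall>y\<in>F. le x y"
        proof
          fix y assume "y \<in> F"
          then have "y \<in> S" "le m y" using FS m by auto
          then show "le x y" using tr xS mS True by blast
        qed
        moreover have "le x x" using tot xS by blast
        ultimately show ?thesis by blast
      next
        case False then have "le m x" using tot xS mS by blast
        then show ?thesis using m by blast
      qed
    qed
  qed
  then show ?thesis using assms(1,2) by blast
qed

lemma exists_sorted:
  assumes fin: "finite S" and tot: "\<forall>a\<in>S. \<forall>b\<in>S. le a b \<or> le b a"
    and tr: "\<forall>a\<in>S. \<forall>b\<in>S. \<forall>c\<in>S. le a b \<longrightarrow> le b c \<longrightarrow> le a c"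
  shows "\<exists>xs. distinct xs \<and> set xs = S \<and> sorted_wrt le xs"
proof -
  have "\<And>A. card A = k \<Longrightarrow> A \<subseteq> S \<Longrightarrow> \<exists>xs. distinct xs \<and> set xs = A \<and> sorted_wrt le xs" for k
  proof (induction k)
    case 0
    then have "A = {}" using fin finite_subset by fastforce
    then show ?case by simp
  next
    case (Suc k)
    have fA: "finite A" using Suc.prems fin finite_subset by blast
    have "A \<noteq> {}" using Suc.prems by auto
    moreover have "\<forall>a\<in>A. \<forall>b\<in>A. le a b \<or> le b a" using tot Suc.prems(2) by blast
    moreover have "\<forall>a\<in>A. \<forall>b\<in>A. \<forall>c\<in>A. le a b \<longrightarrow> le b c \<longrightarrow> le a c"
      using Suc.prems(2) tr by (meson subsetD)
    ultimately obtain m where m: "m \<in> A" "\<forall>y\<in>A. le m y"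
      using exists_min[OF fA] by blast
    have "card (A - {m}) = k" using Suc.prems(1) m(1) fA by simp
    moreover have "A - {m} \<subseteq> S" using Suc.prems(2) by blast
    ultimately obtain xs where xs: "distinct xs" "set xs = A - {m}" "sorted_wrt le xs"
      using Suc.IH by blast
    have "distinct (m # xs)" "set (m # xs) = A" "sorted_wrt le (m # xs)"
      using xs m by auto
    then show ?case by blast
  qed
  then show ?thesis by blast
qed

lemma takeWhile_len:
  assumes "distinct ys" "j < length ys"
  shows "length (takeWhile (\<lambda>x. x \<noteq> ys!j) ys) = j"
proof -
  have e: "ys = take j ys @ ys!j # drop (Suc j) ys" using assms(2) by (rule id_take_nth_drop)
  have "distinct (take j ys @ ys!j # drop (Suc j) ys)" using assms(1) e by metis
  then have "ys!j \<notin> set (take j ys)" by simp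
  then have "\<forall>x\<in>set (take j ys). x \<noteq> ys!j" by blast
  then have "takeWhile (\<lambda>x. x \<noteq> ys!j) (take j ys @ ys!j # drop (Suc j) ys) = take j ys"
    by simp
  then show ?thesis using e assms(2) by (metis length_take min.absorb4)
qed

lemma face_inj:
  assumes "distinct ys" "i < length ys" "j < length ys" "set ys - {ys!i} = set ys - {ys!j}"
  shows "i = j"
proof (rule ccontr)
  assume "i \<noteq> j"
  then have "ys!i \<noteq> ys!j" using assms nth_eq_iff_index_eq by metis
  moreover have "ys!i \<in> set ys" using assms(2) by simp
  ultimately have "ys!i \<in> set ys - {ys!j}" by simp
  then have "ys!i \<in> set ys - {ys!i}" using assms(4) by simp
  then show False by simp
qed

lemma incidence_formula:
  assumes AS: "\<forall>a\<in>S. \<forall>b\<in>S. le a b \<longrightarrow> le b a \<longrightarrow> a = b"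
    and d: "distinct ys" and so: "sorted_wrt le ys" and sub: "set ys \<subseteq> S"
  shows "incidence le (set ys) \<tau> =
     (\<Sum>j<length ys. if \<tau> = set ys - {ys!j} \<and> 2 \<le> length ys then (-1)^j else 0)"
proof -
  have vl: "vlist le (set ys) = ys" using vlist_eq[OF AS d so sub] .
  have cs: "card (set ys) = length ys" using d by (simp add: distinct_card)
  show ?thesis
  proof (cases "\<exists>j<length ys. \<tau> = set ys - {ys!j} \<and> 2 \<le> length ys")
    case True
    then obtain j where j: "j < length ys" "\<tau> = set ys - {ys!j}" "2 \<le> length ys" by blast
    have "(\<Sum>i<length ys. if \<tau> = set ys - {ys!i} \<and> 2 \<le> length ys then (-1)^i else 0)
        = (\<Sum>i<length ys. if i = j then (-1)^j else (0::rat))"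
    proof (rule sum.cong)
      fix i assume "i \<in> {..<length ys}"
      then have i: "i < length ys" by simp
      show "(if \<tau> = set ys - {ys!i} \<and> 2 \<le> length ys then (-1)^i else 0)
           = (if i = j then (-1)^j else (0::rat))"
      proof (cases "i = j")
        case True then show ?thesis using j by simp
      next
        case False
        then have "\<tau> \<noteq> set ys - {ys!i}" using face_inj[OF d i j(1)] j(2) by metis
        then show ?thesis using False by simp
      qed
    qed simp
    also have "\<dots> = (-1)^j" using j(1) by simp
    finally have R: "(\<Sum>i<length ys. if \<tau> = set ys - {ys!i} \<and> 2 \<le> length ys then (-1)^i else 0) = ((-1)^j::rat)" .
    have yj: "ys!j \<in> set ys" using j(1) by simp
    have ct: "card \<tau> = length ys - 1" using j(2) yj cs by simp
    have "card \<tau> \<noteq> 0" using ct j(3) by simp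
    then have "\<tau> \<noteq> {}" by auto
    moreover have "\<tau> \<subseteq> set ys" "card (set ys) = Suc (card \<tau>)"
      using ct j(3) cs j(2) by auto
    moreover have "set ys - \<tau> = {ys!j}" using j(2) yj by auto
    ultimately have "incidence le (set ys) \<tau> = (-1) ^ length (takeWhile (\<lambda>x. x \<noteq> ys!j) ys)"
      unfolding incidence_def vl by simp
    also have "\<dots> = (-1)^j" using takeWhile_len[OF d j(1)] by simp
    finally show ?thesis using R by simp
  next
    case False
    have R: "(\<Sum>i<length ys. if \<tau> = set ys - {ys!i} \<and> 2 \<le> length ys then (-1)^i else 0) = (0::rat)"
    proof (rule sum.neutral, rule ballI)
      fix i assume "i \<in> {..<length ys}"
      then have "i < length ys" by simp
      then have "\<not> (\<tau> = set ys - {ys!i} \<and> 2 \<le> length ys)" using False by blast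
      then show "(if \<tau> = set ys - {ys!i} \<and> 2 \<le> length ys then (-1)^i else 0) = (0::rat)" by simp
    qed
    have "\<not> (\<tau> \<noteq> {} \<and> \<tau> \<subseteq> set ys \<and> card (set ys) = Suc (card \<tau>))"
    proof
      assume H: "\<tau> \<noteq> {} \<and> \<tau> \<subseteq> set ys \<and> card (set ys) = Suc (card \<tau>)"
      have ft: "finite \<tau>" using H by (meson finite_set finite_subset)
      have "card (set ys - \<tau>) = Suc 0" using H card_Diff_subset[OF ft] by simp
      then obtain x where x: "set ys - \<tau> = {x}" using card_1_singleton_iff[THEN iffD1] by blast
      then have "x \<in> set ys" by blast
      then obtain j where j: "j < length ys" "ys!j = x" by (metis in_set_conv_nth)
      have "\<tau> = set ys - {ys!j}" using x j H by blast
      moreover have "card \<tau> \<ge> 1" using H ft by (simp add: Suc_leI card_gt_0_iff)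
      then have "2 \<le> length ys" using H cs by simp
      ultimately show False using False j by blast
    qed
    then have "incidence le (set ys) \<tau> = 0" unfolding incidence_def by simp
    then show ?thesis using R by simp
  qed
qed

lemma face_sum:
  assumes AS: "\<forall>a\<in>S. \<forall>b\<in>S. le a b \<longrightarrow> le b a \<longrightarrow> a = b"
    and d: "distinct ys" and so: "sorted_wrt le ys" and sub: "set ys \<subseteq> S"
    and F: "finite F" "2 \<le> length ys \<Longrightarrow> \<forall>j<length ys. set ys - {ys!j} \<in> F"
  shows "(\<Sum>\<sigma>\<in>F. incidence le (set ys) \<sigma> * g \<sigma>) =
     (\<Sum>j<length ys. if 2 \<le> length ys then (-1)^j * g (set ys - {ys!j}) else 0)"
proof -
  have "(\<Sum>\<sigma>\<in>F. incidence le (set ys) \<sigma> * g \<sigma>) =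
     (\<Sum>\<sigma>\<in>F. \<Sum>j<length ys. (if \<sigma> = set ys - {ys!j} \<and> 2 \<le> length ys then (-1)^j else 0) * g \<sigma>)"
    by (simp add: incidence_formula[OF AS d so sub] sum_distrib_right)
  also have "\<dots> = (\<Sum>j<length ys. \<Sum>\<sigma>\<in>F. (if \<sigma> = set ys - {ys!j} \<and> 2 \<le> length ys then (-1)^j else 0) * g \<sigma>)"
    by (rule sum.swap)
  also have "\<dots> = (\<Sum>j<length ys. if 2 \<le> length ys then (-1)^j * g (set ys - {ys!j}) else 0)"
  proof (rule sum.cong)
    fix j assume j: "j \<in> {..<length ys}"
    show "(\<Sum>\<sigma>\<in>F. (if \<sigma> = set ys - {ys!j} \<and> 2 \<le> length ys then (-1)^j else 0) * g \<sigma>)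
       = (if 2 \<le> length ys then (-1)^j * g (set ys - {ys!j}) else 0)"
    proof (cases "2 \<le> length ys")
      case True
      then have "set ys - {ys!j} \<in> F" using F(2) j by simp
      have "(\<Sum>\<sigma>\<in>F. (if \<sigma> = set ys - {ys!j} \<and> 2 \<le> length ys then (-1)^j else 0) * g \<sigma>)
          = (\<Sum>\<sigma>\<in>F. if \<sigma> = set ys - {ys!j} then (-1)^j * g (set ys - {ys!j}) else 0)"
        by (rule sum.cong) (use True in auto)
      also have "\<dots> = (-1)^j * g (set ys - {ys!j})"
        using \<open>set ys - {ys!j} \<in> F\<close> F(1) by (simp add: sum.delta')
      finally show ?thesis using True by simp
    qed simp
  qed simp
  finally show ?thesis .
qed


lemma four_cons: "4 \<le> length xs \<Longrightarrow> \<exists>a b c d R. xs = a#b#c#d#R"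
  by (simp add: Suc_le_length_iff numeral_eq_Suc) blast

lemma sub_in_K:
  assumes "simplicial_complex K" "A \<in> K" "B \<subseteq> A" "B \<noteq> {}"
  shows "B \<in> K"
  using assms unfolding simplicial_complex_def by blast

lemma in_K_vertices: "A \<in> K \<Longrightarrow> A \<subseteq> vertices K"
  unfolding vertices_def by blast

definition capc :: "('v \<Rightarrow> 'v \<Rightarrow> bool) \<Rightarrow> ('v set \<Rightarrow> rat) \<Rightarrow> 'v set \<Rightarrow> 'v set \<Rightarrow> rat" where
  "capc le T \<rho> \<tau> = (if Suc 2 \<le> card \<rho> \<and> \<tau> = set (drop 2 (vlist le \<rho>))
       then T (set (take (Suc 2) (vlist le \<rho>))) else 0)"

lemma main_rho:
  assumes sc: "simplicial_complex K"
    and AS: "\<forall>a\<in>vertices K. \<forall>b\<in>vertices K. le a b \<longrightarrow> le b a \<longrightarrow> a = b"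
    and d: "distinct xs" and so: "sorted_wrt le xs" and xK: "set xs \<in> K"
    and coc: "is_cocycle K le 2 T"
  shows "(\<Sum>\<sigma>\<in>K. capc le T (set xs) \<sigma> * incidence le \<sigma> \<tau>)
       = (\<Sum>\<sigma>\<in>K. incidence le (set xs) \<sigma> * capc le T \<sigma> \<tau>)"
proof -
  define m where "m = length xs"
  have V: "set xs \<subseteq> vertices K" using xK by (rule in_K_vertices)
  have vx: "vlist le (set xs) = xs" using vlist_eq[OF AS d so V] .
  have cx: "card (set xs) = m" using d m_def by (simp add: distinct_card)
  have finK: "finite K" using sc unfolding simplicial_complex_def by blast
  have capx: "capc le T (set xs) \<sigma> = (if 3 \<le> m \<and> \<sigma> = set (drop 2 xs) then T (set (take 3 xs)) else 0)" for \<sigma>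
    unfolding capc_def vx cx by (simp add: numeral_3_eq_3)
  have L: "(\<Sum>\<sigma>\<in>K. capc le T (set xs) \<sigma> * incidence le \<sigma> \<tau>)
      = (if 3 \<le> m then T (set (take 3 xs)) * incidence le (set (drop 2 xs)) \<tau> else 0)"
  proof (cases "3 \<le> m")
    case True
    have "set (drop 2 xs) \<noteq> {}" using True m_def by auto
    then have DK: "set (drop 2 xs) \<in> K" using sub_in_K[OF sc xK] by (meson set_drop_subset)
    have "(\<Sum>\<sigma>\<in>K. capc le T (set xs) \<sigma> * incidence le \<sigma> \<tau>)
        = (\<Sum>\<sigma>\<in>K. if \<sigma> = set (drop 2 xs) then T (set (take 3 xs)) * incidence le (set (drop 2 xs)) \<tau> else 0)"
      by (rule sum.cong) (use True in \<open>auto simp: capx\<close>)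
    also have "\<dots> = T (set (take 3 xs)) * incidence le (set (drop 2 xs)) \<tau>"
      using DK finK by (simp add: sum.delta')
    finally show ?thesis using True by simp
  next
    case False
    then show ?thesis by (simp add: capx)
  qed
  have facesK: "2 \<le> length xs \<Longrightarrow> \<forall>j<length xs. set xs - {xs!j} \<in> K"
  proof (intro allI impI)
    fix j assume "2 \<le> length xs" "j < length xs"
    then have "card (set xs - {xs!j}) = m - 1" using cx by simp
    then have "card (set xs - {xs!j}) \<noteq> 0" using \<open>2 \<le> length xs\<close> m_def by simp
    then have "set xs - {xs!j} \<noteq> {}" by auto
    then show "set xs - {xs!j} \<in> K" using sub_in_K[OF sc xK] by blast
  qed
  have R: "(\<Sum>\<sigma>\<in>K. incidence le (set xs) \<sigma> * capc le T \<sigma> \<tau>)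
      = (\<Sum>j<m. if 2 \<le> m then (-1)^j * capc le T (set xs - {xs!j}) \<tau> else 0)"
    unfolding m_def by (rule face_sum[OF AS d so V finK facesK])
  have C: "capc le T (set xs - {x}) \<tau> = (if 3 \<le> m - 1 \<and> \<tau> = set (drop 2 (filter (\<lambda>y. y \<noteq> x) xs))
        then T (set (take 3 (filter (\<lambda>y. y \<noteq> x) xs))) else 0)" if x: "x \<in> set xs" for x
  proof -
    have e: "set xs - {x} = set (filter (\<lambda>y. y \<noteq> x) xs)" by auto
    have "vlist le (set (filter (\<lambda>y. y \<noteq> x) xs)) = filter (\<lambda>y. y \<noteq> x) xs"
      by (rule vlist_eq[OF AS]) (use d so V in \<open>auto intro: sorted_wrt_filter\<close>)
    moreover have "card (set xs - {x}) = m - 1" using cx x by simp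
    ultimately show ?thesis unfolding capc_def e by (simp add: numeral_3_eq_3)
  qed
  show ?thesis
  proof (cases "4 \<le> m")
    case False
    have R0: "(\<Sum>j<m. if 2 \<le> m then (-1)^j * capc le T (set xs - {xs!j}) \<tau> else 0) = 0"
    proof (rule sum.neutral, rule ballI)
      fix j assume "j \<in> {..<m}"
      then have "xs!j \<in> set xs" using m_def by simp
      then show "(if 2 \<le> m then (-1)^j * capc le T (set xs - {xs!j}) \<tau> else 0) = 0"
      proof -
        have "\<not> 3 \<le> m - 1" using False by arith
        then show ?thesis using C[OF \<open>xs!j \<in> set xs\<close>] by simp
      qed
    qed
    have L0: "(if 3 \<le> m then T (set (take 3 xs)) * incidence le (set (drop 2 xs)) \<tau> else 0) = 0"
    proof (cases "3 \<le> m")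
      case True
      then have m3: "m = 3" using False by simp
      have "incidence le (set (drop 2 xs)) \<tau> =
          (\<Sum>j<length (drop 2 xs). if \<tau> = set (drop 2 xs) - {drop 2 xs!j} \<and> 2 \<le> length (drop 2 xs) then (-1)^j else 0)"
        by (rule incidence_formula[OF AS]) (use d so V in \<open>auto dest: in_set_dropD\<close>)
      also have "\<dots> = 0" using m3 m_def by simp
      finally show ?thesis by simp
    qed simp
    show ?thesis using L R L0 R0 by simp
  next
    case True
    then obtain a b c e R where xs: "xs = a#b#c#e#R" using four_cons m_def by blast
    from d have dd: "a \<noteq> b" "a \<noteq> c" "a \<noteq> e" "a \<notin> set R" "b \<noteq> c" "b \<noteq> e" "b \<notin> set R"
      "c \<noteq> e" "c \<notin> set R" "e \<notin> set R" "distinct R" unfolding xs by auto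
    have mR: "m = Suc (Suc (Suc (Suc (length R))))" using m_def xs by simp
    have xs0: "xs!0 = a" "xs!1 = b" "xs!2 = c" "xs!3 = e" "\<And>i. xs!(Suc (Suc (Suc (Suc i)))) = R!i"
      unfolding xs by (simp_all add: numeral_eq_Suc)
    have inx: "a \<in> set xs" "b \<in> set xs" "c \<in> set xs" "e \<in> set xs" "\<And>i. i < length R \<Longrightarrow> R!i \<in> set xs"
      unfolding xs by simp_all
    have m3: "3 \<le> m - 1" using mR by simp
    have cocy: "T {b,c,e} - T {a,c,e} + T {a,b,e} - T {a,b,c} = 0"
    proof -
      let ?q = "[a,b,c,e]"
      have qK: "set ?q \<in> K" by (rule sub_in_K[OF sc xK]) (auto simp: xs)
      have cq: "card (set ?q) = 2 + 2" using dd by simp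
      have Vq: "set ?q \<subseteq> vertices K" using qK by (rule in_K_vertices)
      have dq: "distinct ?q" using dd by simp
      have sq: "sorted_wrt le ?q" using so unfolding xs by simp
      have "(\<Sum>\<tau>\<in>Pow (set ?q). incidence le (set ?q) \<tau> * T \<tau>) = 0"
        using coc qK cq unfolding is_cocycle_def by blast
      moreover have "(\<Sum>\<tau>\<in>Pow (set ?q). incidence le (set ?q) \<tau> * T \<tau>)
          = (\<Sum>j<length ?q. if 2 \<le> length ?q then (-1)^j * T (set ?q - {?q!j}) else 0)"
        by (rule face_sum[OF AS dq sq Vq]) auto
      moreover have "(\<Sum>j<length ?q. if 2 \<le> length ?q then (-1)^j * T (set ?q - {?q!j}) else 0)
          = T (set ?q - {a}) - T (set ?q - {b}) + T (set ?q - {c}) - T (set ?q - {e})"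
        by (simp add: numeral_eq_Suc)
      moreover have "set ?q - {a} = {b,c,e}" "set ?q - {b} = {a,c,e}" "set ?q - {c} = {a,b,e}"
          "set ?q - {e} = {a,b,c}" using dd by auto
      ultimately show ?thesis by simp
    qed
    have t3: "set (take 3 xs) = {a,b,c}" unfolding xs by (simp add: numeral_3_eq_3)
    have d2: "drop 2 xs = c#e#R" unfolding xs by simp
    have VD: "set (c#e#R) \<subseteq> vertices K" using V unfolding xs by auto
    have I1: "incidence le (set (c#e#R)) \<tau> = (\<Sum>i<length (c#e#R).
          if \<tau> = set (c#e#R) - {(c#e#R)!i} \<and> 2 \<le> length (c#e#R) then (-1)^i else 0)"
      by (rule incidence_formula[OF AS _ _ VD]) (use d so in \<open>simp_all add: xs\<close>)
    have h0: "set (c#e#R) - {c} = set (e#R)" and h1: "set (c#e#R) - {e} = set (c#R)" using dd by auto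
    have h0': "insert c (insert e (set R)) - {c} = insert e (set R)"
      and h1': "insert c (insert e (set R)) - {e} = insert c (set R)" using dd by auto
    have pm: "\<And>i. (-1::rat)^Suc (Suc i) = (-1)^i" by simp
    define S1 where "S1 = (\<Sum>i<length R. if \<tau> = set (c#e#R) - {R!i} then (-1)^i else (0::rat))"
    have I2: "incidence le (set (c#e#R)) \<tau> =
        (if \<tau> = set (e#R) then 1 else 0) + ((if \<tau> = set (c#R) then -1 else 0) + S1)"
    proof -
      have "length (c#e#R) = Suc (Suc (length R))" by simp
      then show ?thesis
        unfolding I1 S1_def by (simp only: sum.lessThan_Suc_shift) (simp add: h0' h1' pm cong: if_cong del: sum.lessThan_Suc)
    qed
    have LL: "(\<Sum>\<sigma>\<in>K. capc le T (set xs) \<sigma> * incidence le \<sigma> \<tau>) =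
        T {a,b,c} * ((if \<tau> = set (e#R) then 1 else 0) + ((if \<tau> = set (c#R) then -1 else 0) + S1))"
      using L True unfolding t3 d2 I2 by simp
    have fR: "filter (\<lambda>y. y \<noteq> a) R = R" "filter (\<lambda>y. y \<noteq> b) R = R"
      "filter (\<lambda>y. y \<noteq> c) R = R" "filter (\<lambda>y. y \<noteq> e) R = R"
      using dd by (auto simp: filter_id_conv)
    have ca: "capc le T (set xs - {a}) \<tau> = (if \<tau> = set (e#R) then T {b,c,e} else 0)"
      using C[OF inx(1)] m3 dd fR unfolding xs by (simp add: numeral_3_eq_3)
    have cb: "capc le T (set xs - {b}) \<tau> = (if \<tau> = set (e#R) then T {a,c,e} else 0)"
      using C[OF inx(2)] m3 dd fR unfolding xs by (simp add: numeral_3_eq_3)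
    have cc: "capc le T (set xs - {c}) \<tau> = (if \<tau> = set (e#R) then T {a,b,e} else 0)"
      using C[OF inx(3)] m3 dd fR unfolding xs by (simp add: numeral_3_eq_3)
    have ce: "capc le T (set xs - {e}) \<tau> = (if \<tau> = set (c#R) then T {a,b,c} else 0)"
      using C[OF inx(4)] m3 dd fR unfolding xs by (simp add: numeral_3_eq_3)
    have ci: "capc le T (set xs - {R!i}) \<tau> = (if \<tau> = set (c#e#R) - {R!i} then T {a,b,c} else 0)"
      if i: "i < length R" for i
    proof -
      have Ri: "R!i \<in> set R" using i by simp
      then have ne: "R!i \<noteq> a" "R!i \<noteq> b" "R!i \<noteq> c" "R!i \<noteq> e" using dd by auto
      have f: "filter (\<lambda>y. y \<noteq> R!i) xs = a#b#c#e#filter (\<lambda>y. y \<noteq> R!i) R"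
        unfolding xs using ne by simp
      have st: "set (drop 2 (a#b#c#e#filter (\<lambda>y. y \<noteq> R!i) R)) = set (c#e#R) - {R!i}"
        using ne by auto
      have tk: "set (take 3 (a#b#c#e#filter (\<lambda>y. y \<noteq> R!i) R)) = {a,b,c}"
        by (simp add: numeral_3_eq_3)
      show ?thesis using C[OF inx(5)[OF i]] m3 unfolding f st tk by simp
    qed
    define S2 where "S2 = (\<Sum>i<length R. (-1)^i * (if \<tau> = set (c#e#R) - {R!i} then T {a,b,c} else 0))"
    have RR: "(\<Sum>\<sigma>\<in>K. incidence le (set xs) \<sigma> * capc le T \<sigma> \<tau>) =
       (if \<tau> = set (e#R) then T {b,c,e} else 0) - (if \<tau> = set (e#R) then T {a,c,e} else 0)
       + (if \<tau> = set (e#R) then T {a,b,e} else 0) - (if \<tau> = set (c#R) then T {a,b,c} else 0) + S2"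
    proof -
      have "(\<Sum>j<m. if 2 \<le> m then (-1)^j * capc le T (set xs - {xs!j}) \<tau> else 0)
          = (\<Sum>j<m. (-1)^j * capc le T (set xs - {xs!j}) \<tau>)" using mR by simp
      also have "\<dots> = capc le T (set xs - {a}) \<tau> - capc le T (set xs - {b}) \<tau>
           + capc le T (set xs - {c}) \<tau> - capc le T (set xs - {e}) \<tau>
           + (\<Sum>i<length R. (-1)^i * capc le T (set xs - {R!i}) \<tau>)"
        unfolding mR sum.lessThan_Suc_shift xs0[symmetric] by (simp add: numeral_eq_Suc)
      also have "(\<Sum>i<length R. (-1)^i * capc le T (set xs - {R!i}) \<tau>) = S2"
        unfolding S2_def by (rule sum.cong) (simp_all add: ci)
      finally show ?thesis using R unfolding ca cb cc ce by simp
    qed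
    have S12: "T {a,b,c} * S1 = S2"
      unfolding S1_def S2_def sum_distrib_left by (rule sum.cong) simp_all
    have nDC: "set (e#R) \<noteq> set (c#R)" using dd by auto
    show ?thesis
      unfolding LL RR using cocy S12 nDC by (cases "\<tau> = set (e#R)") (simp_all add: algebra_simps)
  qed
qed


lemma vertex_point_closed:
  assumes sc: "simplicial_complex K" and s: "\<sigma> \<in> K" and v: "v \<in> \<sigma>"
  shows "vertex_point v \<in> closed_simplex K \<sigma>"
proof -
  have fin: "finite (vertices K)" using sc unfolding simplicial_complex_def vertices_def by blast
  have vV: "v \<in> vertices K" using s v unfolding vertices_def by blast
  have sup: "{w. vertex_point v w \<noteq> 0} = {v}" unfolding vertex_point_def by auto
  have "{v} \<in> K" using sub_in_K[OF sc s] v by blast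
  moreover have "sum (vertex_point v) (vertices K) = 1"
    using fin vV unfolding vertex_point_def by (simp add: sum.delta')
  moreover have "\<forall>w. 0 \<le> vertex_point v w" unfolding vertex_point_def by simp
  ultimately show ?thesis unfolding closed_simplex_def realization_def using v by (simp add: sup)
qed

lemma key_support:
  assumes sc: "simplicial_complex K"
    and inj: "inj_on h (realization K)"
    and full: "is_full_subcomplex K h H"
    and gord: "good_ordering_wrt K h le H"
    and TW: "\<forall>\<sigma>\<in>K. card \<sigma> = 3 \<and> h ` closed_simplex K \<sigma> \<inter> H = {} \<longrightarrow> T \<sigma> = 0"
    and xK: "set xs \<in> K" and d: "distinct xs" and so: "sorted_wrt le xs"
    and l3: "3 \<le> length xs" and Tn: "T (set (take 3 xs)) \<noteq> 0"
  shows "set (drop 2 xs) \<in> simplices_in K h H"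
proof -
  have ordK: "is_ordering K le" using gord unfolding good_ordering_wrt_def by blast
  have refl: "\<forall>a\<in>vertices K. le a a" using ord_props(3)[OF ordK] .
  have gg: "\<forall>v\<in>vertices K. \<forall>w\<in>vertices K. h (vertex_point v) \<in> H \<and> le v w \<longrightarrow> h (vertex_point w) \<in> H"
    using gord unfolding good_ordering_wrt_def by blast
  have V: "set xs \<subseteq> vertices K" using xK by (rule in_K_vertices)
  define s3 where "s3 = set (take 3 xs)"
  have s3ne: "s3 \<noteq> {}" using l3 unfolding s3_def by (cases xs) auto
  have s3K: "s3 \<in> K" using sub_in_K[OF sc xK _ s3ne] unfolding s3_def by (meson set_take_subset)
  have cs3: "card s3 = 3" unfolding s3_def using d l3 by (simp add: distinct_card)
  have "h ` closed_simplex K s3 \<inter> H \<noteq> {}" using TW s3K cs3 Tn unfolding s3_def by blast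
  then obtain f where f: "f \<in> closed_simplex K s3" "h f \<in> H" by blast
  have sub: "is_subcomplex K h H" using full unfolding is_full_subcomplex_def by blast
  then have "h f \<in> (\<Union>\<sigma>\<in>simplices_in K h H. h ` closed_simplex K \<sigma>)"
    unfolding is_subcomplex_def using f(2) by blast
  then obtain \<sigma>' g where sg: "\<sigma>' \<in> simplices_in K h H" "g \<in> closed_simplex K \<sigma>'" "h f = h g" by blast
  have fr: "f \<in> realization K" "g \<in> realization K" using f(1) sg(2) unfolding closed_simplex_def by auto
  have "f = g" using inj fr sg(3) unfolding inj_on_def by blast
  have suppK: "{v. f v \<noteq> 0} \<in> K" using fr(1) unfolding realization_def by blast
  then have "{v. f v \<noteq> 0} \<noteq> {}" using sc unfolding simplicial_complex_def by blast
  then obtain v where v: "f v \<noteq> 0" by blast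
  have vs3: "v \<in> s3" using f(1) v unfolding closed_simplex_def by blast
  have vs': "v \<in> \<sigma>'" using sg(2) v \<open>f = g\<close> unfolding closed_simplex_def by blast
  have s'K: "\<sigma>' \<in> K" and s'H: "h ` closed_simplex K \<sigma>' \<subseteq> H" using sg(1) unfolding simplices_in_def by auto
  have vH: "h (vertex_point v) \<in> H" using vertex_point_closed[OF sc s'K vs'] s'H by blast
  obtain i where i: "i < 3" "i < length xs" "xs!i = v" using vs3 unfolding s3_def
    by (auto simp: in_set_conv_nth)
  have vV: "v \<in> vertices K" using V vs3 unfolding s3_def by (meson in_mono set_take_subset)
  have allH: "\<forall>w\<in>set (drop 2 xs). h (vertex_point w) \<in> H"
  proof
    fix w assume "w \<in> set (drop 2 xs)"
    then obtain i' where i': "i' < length (drop 2 xs)" "drop 2 xs ! i' = w"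
      by (metis in_set_conv_nth)
    define j where "j = i' + 2"
    have j: "j < length xs" "2 \<le> j" "xs!j = w" using i' unfolding j_def by (auto simp: add.commute)
    have wV: "w \<in> vertices K" using V j by auto
    have "le v w"
    proof (cases "i = j")
      case True then show ?thesis using refl vV i j by auto
    next
      case False
      then have "i < j" using i j by simp
      then show ?thesis using so i j by (metis sorted_wrt_iff_nth_less)
    qed
    then show "h (vertex_point w) \<in> H" using gg vV wV vH by blast
  qed
  have dne: "set (drop 2 xs) \<noteq> {}" using l3 by auto
  have dK: "set (drop 2 xs) \<in> K" using sub_in_K[OF sc xK _ dne] by (meson set_drop_subset)
  show ?thesis using full dK allH unfolding is_full_subcomplex_def by blast
qed


lemma cap_eq: "cap_ord K le 2 T c = (\<lambda>\<tau>. \<Sum>\<sigma>\<in>K. c \<sigma> * capc le T \<sigma> \<tau>)"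
  unfolding cap_ord_def capc_def by simp

lemma sorted_list_of:
  assumes sc: "simplicial_complex K" and ordK: "is_ordering K le" and r: "\<rho> \<in> K"
  obtains xs where "distinct xs" "set xs = \<rho>" "sorted_wrt le xs"
proof -
  have fin: "finite \<rho>" using sc r unfolding simplicial_complex_def by blast
  have tot: "\<forall>a\<in>\<rho>. \<forall>b\<in>\<rho>. le a b \<or> le b a" using ord_props(4)[OF ordK] r by blast
  have rV: "\<rho> \<subseteq> vertices K" using r by (rule in_K_vertices)
  have tr: "\<forall>a\<in>\<rho>. \<forall>b\<in>\<rho>. \<forall>c\<in>\<rho>. le a b \<longrightarrow> le b c \<longrightarrow> le a c"
    using ord_props(2)[OF ordK] rV by (meson subsetD)
  show ?thesis using exists_sorted[OF fin tot tr] that by blast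
qed

lemma H_face:
  assumes n: "1 \<le> n"
  shows "cubical_face n (Hyp n 1 (Some 0))"
proof -
  define x0 :: "nat \<Rightarrow> real \<times> complex" where "x0 = (\<lambda>i. if i \<in> {1..n} then (-1, 0) else undefined)"
  have "(-1::real, 0::complex) \<in> P1" unfolding P1_def by (simp add: norm_Pair)
  then have "x0 \<in> Pn n" unfolding Pn_def Ptop_def x0_def by (auto simp: PiE_def extensional_def)
  moreover have "zc (x0 1) = Some 0" using n unfolding x0_def zc_def by simp
  ultimately have ne: "Hyp n 1 (Some 0) \<noteq> {}" unfolding Hyp_def by blast
  have "Hyp n 1 (Some 0) = Pn n \<inter> (\<Inter>(i,\<alpha>)\<in>{(1::nat, Some (0::complex))}. Hyp n i \<alpha>)"
    unfolding Hyp_def by auto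
  moreover have "{(1::nat, Some (0::complex))} \<subseteq> {1..n} \<times> {Some 0, None}" using n by auto
  ultimately show ?thesis unfolding cubical_face_def using ne by blast
qed

theorem proposition3p6:
  fixes n :: nat
    and K :: "'v set set"
    and h :: "('v \<Rightarrow> real) \<Rightarrow> nat \<Rightarrow> real \<times> complex"
    and T :: "'v set \<Rightarrow> rat"
    and le :: "'v \<Rightarrow> 'v \<Rightarrow> bool"
  assumes n: "1 \<le> n"
    and good: "good_triangulation n K h"
    and T_cocycle: "is_cocycle K le 2 T"
    and T_rel_W: "\<forall>\<sigma>\<in>K. card \<sigma> = 3 \<and> h ` closed_simplex K \<sigma> \<inter> Hyp n 1 (Some 0) = {}
                    \<longrightarrow> T \<sigma> = 0"
    and ord: "good_ordering_wrt K h le (Hyp n 1 (Some 0))"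
  shows "(\<forall>k c. is_chain K k c \<longrightarrow> bdry K le (cap_ord K le 2 T c) = cap_ord K le 2 T (bdry K le c))
    \<and> (\<forall>k c. is_chain K k c \<longrightarrow>
          is_chain K (k - 2) (cap_ord K le 2 T c) \<and>
          supported_in (simplices_in K h (Hyp n 1 (Some 0))) (cap_ord K le 2 T c))
    \<and> (\<forall>k c. is_chain K k c \<and> supported_in (simplices_in K h (Dn n)) c \<longrightarrow>
          supported_in (simplices_in K h (Dn n \<inter> Hyp n 1 (Some 0))) (cap_ord K le 2 T c))"
proof -
  let ?H = "Hyp n 1 (Some 0)"
  have sc: "simplicial_complex K" using good unfolding good_triangulation_def by blast
  have hm: "homeomorphic_map (top_of_set (realization K)) (Ptop n) h"
    using good unfolding good_triangulation_def by blast
  have inj: "inj_on h (realization K)"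
    using homeomorphic_imp_injective_map[OF hm] by simp
  have full: "is_full_subcomplex K h ?H"
  proof -
    have "\<forall>F. finite F \<and> (\<forall>C\<in>F. cubical_face n C) \<longrightarrow> is_full_subcomplex K h (\<Union>F)"
      using good unfolding good_triangulation_def by blast
    then have "is_full_subcomplex K h (\<Union>{?H})" using H_face[OF n] by blast
    then show ?thesis by simp
  qed
  have ordK: "is_ordering K le" using ord unfolding good_ordering_wrt_def by blast
  have AS: "\<forall>a\<in>vertices K. \<forall>b\<in>vertices K. le a b \<longrightarrow> le b a \<longrightarrow> a = b" using ord_props(1)[OF ordK] .
  have finK: "finite K" using sc unfolding simplicial_complex_def by blast
  have P1: "bdry K le (cap_ord K le 2 T c) = cap_ord K le 2 T (bdry K le c)" for c
  proof
    fix \<tau>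
    have "bdry K le (cap_ord K le 2 T c) \<tau> = (\<Sum>\<sigma>\<in>K. \<Sum>\<rho>\<in>K. c \<rho> * (capc le T \<rho> \<sigma> * incidence le \<sigma> \<tau>))"
      unfolding bdry_def cap_eq by (simp add: sum_distrib_right mult.assoc)
    also have "\<dots> = (\<Sum>\<rho>\<in>K. c \<rho> * (\<Sum>\<sigma>\<in>K. capc le T \<rho> \<sigma> * incidence le \<sigma> \<tau>))"
      by (subst sum.swap) (simp add: sum_distrib_left)
    also have "\<dots> = (\<Sum>\<rho>\<in>K. c \<rho> * (\<Sum>\<sigma>\<in>K. incidence le \<rho> \<sigma> * capc le T \<sigma> \<tau>))"
    proof (rule sum.cong)
      fix \<rho> assume r: "\<rho> \<in> K"
      obtain xs where xs: "distinct xs" "set xs = \<rho>" "sorted_wrt le xs"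
        using sorted_list_of[OF sc ordK r] by blast
      show "c \<rho> * (\<Sum>\<sigma>\<in>K. capc le T \<rho> \<sigma> * incidence le \<sigma> \<tau>) = c \<rho> * (\<Sum>\<sigma>\<in>K. incidence le \<rho> \<sigma> * capc le T \<sigma> \<tau>)"
        using main_rho[OF sc AS xs(1) xs(3) _ T_cocycle, of \<tau>] xs(2) r by simp
    qed simp
    also have "\<dots> = (\<Sum>\<sigma>\<in>K. \<Sum>\<rho>\<in>K. c \<rho> * (incidence le \<rho> \<sigma> * capc le T \<sigma> \<tau>))"
      by (subst sum.swap) (simp add: sum_distrib_left)
    also have "\<dots> = cap_ord K le 2 T (bdry K le c) \<tau>"
      unfolding bdry_def cap_eq by (simp add: sum_distrib_right mult.assoc)
    finally show "bdry K le (cap_ord K le 2 T c) \<tau> = cap_ord K le 2 T (bdry K le c) \<tau>" .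
  qed
  have supp: "\<exists>\<rho>\<in>K. c \<rho> \<noteq> 0 \<and> \<tau> \<subseteq> \<rho> \<and> card \<tau> = card \<rho> - 2 \<and> 3 \<le> card \<rho> \<and> \<tau> \<in> simplices_in K h ?H"
    if nz: "cap_ord K le 2 T c \<tau> \<noteq> 0" for c \<tau>
  proof -
    from nz obtain \<rho> where r: "\<rho> \<in> K" "c \<rho> * capc le T \<rho> \<tau> \<noteq> 0"
      unfolding cap_eq by (meson sum.neutral)
    obtain xs where xs: "distinct xs" "set xs = \<rho>" "sorted_wrt le xs"
      using sorted_list_of[OF sc ordK r(1)] by blast
    have V: "set xs \<subseteq> vertices K" using r(1) xs(2) in_K_vertices by blast
    have vx: "vlist le \<rho> = xs" using vlist_eq[OF AS xs(1) xs(3) V] xs(2) by simp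
    have cr: "card \<rho> = length xs" using xs by (metis distinct_card)
    have cz: "capc le T \<rho> \<tau> \<noteq> 0" "c \<rho> \<noteq> 0" using r(2) by auto
    then have l3: "3 \<le> length xs" and te: "\<tau> = set (drop 2 xs)" and Tn: "T (set (take 3 xs)) \<noteq> 0"
      unfolding capc_def vx cr by (auto simp: numeral_3_eq_3 split: if_splits)
    have "\<tau> \<in> simplices_in K h ?H"
      using key_support[OF sc inj full ord T_rel_W _ xs(1) xs(3) l3 Tn] r(1) xs(2) te by simp
    moreover have "\<tau> \<subseteq> \<rho>" using te xs(2) by (metis set_drop_subset)
    moreover have "card \<tau> = card \<rho> - 2" using te cr xs(1) by (simp add: distinct_card)
    ultimately show ?thesis using r(1) cz(2) l3 cr by auto
  qed
  have P2: "is_chain K (k - 2) (cap_ord K le 2 T c) \<and> supported_in (simplices_in K h ?H) (cap_ord K le 2 T c)"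
    if ch: "is_chain K k c" for k c
  proof
    show "is_chain K (k - 2) (cap_ord K le 2 T c)"
      unfolding is_chain_def
    proof (intro allI impI)
      fix \<tau> assume "cap_ord K le 2 T c \<tau> \<noteq> 0"
      then obtain \<rho> where r: "\<rho> \<in> K" "c \<rho> \<noteq> 0" "card \<tau> = card \<rho> - 2" "3 \<le> card \<rho>"
        "\<tau> \<in> simplices_in K h ?H" using supp by blast
      have "card \<rho> = Suc k" using ch r(2) unfolding is_chain_def by blast
      then show "\<tau> \<in> K \<and> card \<tau> = Suc (k - 2)" using r unfolding simplices_in_def by auto
    qed
    show "supported_in (simplices_in K h ?H) (cap_ord K le 2 T c)"
      unfolding supported_in_def using supp by blast
  qed
  have P3: "supported_in (simplices_in K h (Dn n \<inter> ?H)) (cap_ord K le 2 T c)"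
    if ch: "is_chain K k c" and sD: "supported_in (simplices_in K h (Dn n)) c" for k c
    unfolding supported_in_def
  proof (intro allI impI)
    fix \<tau> assume "cap_ord K le 2 T c \<tau> \<noteq> 0"
    then obtain \<rho> where r: "\<rho> \<in> K" "c \<rho> \<noteq> 0" "\<tau> \<subseteq> \<rho>" "\<tau> \<in> simplices_in K h ?H"
      using supp by blast
    have "\<rho> \<in> simplices_in K h (Dn n)" using sD r(2) unfolding supported_in_def by blast
    then have rD: "h ` closed_simplex K \<rho> \<subseteq> Dn n" unfolding simplices_in_def by blast
    have "closed_simplex K \<tau> \<subseteq> closed_simplex K \<rho>" using r(3) unfolding closed_simplex_def by blast
    then have "h ` closed_simplex K \<tau> \<subseteq> Dn n" using rD by blast
    then show "\<tau> \<in> simplices_in K h (Dn n \<inter> ?H)" using r(4) unfolding simplices_in_def by blast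
  qed
  show ?thesis using P1 P2 P3 by blast
qed

end
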